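(* Let $A:\Omega^+\to\mathbb{R}$ be Lipschitz, $W$ a Lipschitz involution kernel for $A$ with associated $A^-:\Omega^-\to\mathbb{R}$. Let $\mu$ be any equilibrium probability on $\Omega^+$, $\hat\mu$ its unique $\hat\sigma$-invariant extension to $\hat\Omega$ and $\mu^-$ the marginal of $\hat\mu$ on $\Omega^-$. Then \[(1)\ \int A\,d\mu=\int A^-\,d\mu^-,\qquad (2)\ \int A^-\circ\theta^{-1}\,d\mu=\int A\circ\theta\,d\mu^-.\]
   Context: $(M,d)$ is a compact metric space; $\Omega^+=M^{\mathbb{N}}$ with points $x=|x_1,x_2,\dots)$, $\Omega^-=M^{\mathbb{N}}$ with points $y=(\dots,y_2,y_1|$; $\hat\Omega=\Omega^-\times\Omega^+$ with $\hat\sigma(\dots,y_2,y_1|x_1,x_2,\dots)=(\dots,y_2,y_1,x_1|x_2,\dots)$. $\theta:\Omega^-\to\Omega^+$, $\theta(\dots,z_2,z_1|)=|z_1,z_2,\dots)$. A shift-invariant probability $\mu$ on $\Omega^+$ is an equilibrium probability if there exist a Borel probability $\nu$ on $M$ with $\operatorname{supp}\nu=M$ and a Lipschitz $B:\Omega^+\to\mathbb{R}$ with $\int e^{B(|a,x_1,x_2,\dots))}d\nu(a)=1$ for all $x$ such that $\int\!\int e^{B(|a,x))}f(|a,x))\,d\nu(a)\,d\mu(x)=\int f\,d\mu$ for all continuous $f$. Its $\hat\sigma$-invariant extension is the unique $\hat\sigma$-invariant probability on $\hat\Omega$ with marginal $\mu$ on $\Omega^+$. A Lipschitz $W:\hat\Omega\to\mathbb{R}$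 is an involution kernel for $A$ if $A^-:=A\circ\hat\sigma^{-1}+W\circ\hat\sigma^{-1}-W$ does not depend on $x$, i.e. $A^-(y)=A(|y_1,x_1,x_2,\dots))+W(\dots,y_3,y_2|y_1,x_1,\dots)-W(\dots,y_2,y_1|x_1,\dots)$; $A^-$ is viewed as a function on $\Omega^-$. *)

theory Defs
  imports "HOL-Analysis.Analysis" "HOL-Probability.Probability"
begin

text \<open>Points of Omega+ = M^N are functions x :: nat => 'm with x 0 = x_1, x 1 = x_2, ...
 Points of Omega- are functions y :: nat => 'm with y 0 = y_1, y 1 = y_2, ...
 Omega-hat = Omega- x Omega+, a pair (y, x).\<close>

definition seq_dist :: "(nat \<Rightarrow> 'm::metric_space) \<Rightarrow> (nat \<Rightarrow> 'm) \<Rightarrow> real" where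
  "seq_dist x z = (\<Sum>n. (1/2)^(Suc n) * dist (x n) (z n))"

definition hat_dist :: "(nat \<Rightarrow> 'm::metric_space) \<times> (nat \<Rightarrow> 'm) \<Rightarrow> (nat \<Rightarrow> 'm) \<times> (nat \<Rightarrow> 'm) \<Rightarrow> real" where
  "hat_dist p q = seq_dist (fst p) (fst q) + seq_dist (snd p) (snd q)"

definition seq_lipschitz :: "((nat \<Rightarrow> 'm::metric_space) \<Rightarrow> real) \<Rightarrow> bool" where
  "seq_lipschitz f \<longleftrightarrow> (\<exists>C. \<forall>x z. \<bar>f x - f z\<bar> \<le> C * seq_dist x z)"

definition hat_lipschitz :: "((nat \<Rightarrow> 'm::metric_space) \<times> (nat \<Rightarrow> 'm) \<Rightarrow> real) \<Rightarrow> bool" where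
  "hat_lipschitz f \<longleftrightarrow> (\<exists>C. \<forall>p q. \<bar>f p - f q\<bar> \<le> C * hat_dist p q)"

definition scons :: "'m \<Rightarrow> (nat \<Rightarrow> 'm) \<Rightarrow> (nat \<Rightarrow> 'm)" where
  "scons a x = (\<lambda>n. case n of 0 \<Rightarrow> a | Suc k \<Rightarrow> x k)"

definition shift :: "(nat \<Rightarrow> 'm) \<Rightarrow> (nat \<Rightarrow> 'm)" where
  "shift x = (\<lambda>n. x (Suc n))"

text \<open>sigma-hat (..,y2,y1|x1,x2,..) = (..,y2,y1,x1|x2,..)\<close>
definition sigma_hat :: "(nat \<Rightarrow> 'm) \<times> (nat \<Rightarrow> 'm) \<Rightarrow> (nat \<Rightarrow> 'm) \<times> (nat \<Rightarrow> 'm)" where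
  "sigma_hat p = (scons (snd p 0) (fst p), shift (snd p))"

text \<open>theta(..,z2,z1|) = |z1,z2,..): with our indexing it is the identity map\<close>
definition theta :: "(nat \<Rightarrow> 'm) \<Rightarrow> (nat \<Rightarrow> 'm)" where
  "theta y = (\<lambda>n. y n)"

definition msupport :: "'m::topological_space measure \<Rightarrow> 'm set" where
  "msupport \<nu> = {a. \<forall>U. open U \<longrightarrow> a \<in> U \<longrightarrow> emeasure \<nu> U > 0}"

definition equilibrium_prob :: "(nat \<Rightarrow> 'm::metric_space) measure \<Rightarrow> bool" where
  "equilibrium_prob \<mu> \<longleftrightarrow>
     prob_space \<mu> \<and> sets \<mu> = sets borel \<and> distr \<mu> borel shift = \<mu> \<and>
     (\<exists>(\<nu>::'m measure) B. prob_space \<nu> \<and> sets \<nu> = sets borel \<and> msupport \<nu> = UNIV \<and>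
        seq_lipschitz B \<and>
        (\<forall>x. (\<integral>a. exp (B (scons a x)) \<partial>\<nu>) = 1) \<and>
        (\<forall>f::(nat \<Rightarrow> 'm) \<Rightarrow> real. continuous_on UNIV f \<longrightarrow>
           (\<integral>x. (\<integral>a. exp (B (scons a x)) * f (scons a x) \<partial>\<nu>) \<partial>\<mu>) = (\<integral>x. f x \<partial>\<mu>)))"

text \<open>hat-sigma-invariant extension of mu: a sigma-hat-invariant probability on Omega-hat with
  marginal mu on Omega+ (unique by the paper)\<close>
definition invariant_extension ::
  "(nat \<Rightarrow> 'm::metric_space) measure \<Rightarrow> ((nat \<Rightarrow> 'm) \<times> (nat \<Rightarrow> 'm)) measure \<Rightarrow> bool" where
  "invariant_extension \<mu> \<mu>h \<longleftrightarrow>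
     prob_space \<mu>h \<and> sets \<mu>h = sets borel \<and> distr \<mu>h borel sigma_hat = \<mu>h \<and>
     distr \<mu>h borel snd = \<mu>"

text \<open>W is an involution kernel for A with associated A^- (viewed as a function on Omega-):
  A^-(y) = A(y1 x) + W(sigma-hat^{-1}(y,x)) - W(y,x), independent of x.\<close>
definition involution_kernel ::
  "((nat \<Rightarrow> 'm::metric_space) \<Rightarrow> real) \<Rightarrow> ((nat \<Rightarrow> 'm) \<times> (nat \<Rightarrow> 'm) \<Rightarrow> real) \<Rightarrow> ((nat \<Rightarrow> 'm) \<Rightarrow> real) \<Rightarrow> bool" where
  "involution_kernel A W Am \<longleftrightarrow> hat_lipschitz W \<and>
     (\<forall>y x. Am y = A (scons (y 0) x) + W (shift y, scons (y 0) x) - W (y, x))"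

end

theory Submission imports Defs begin

lemma geo_sum: "summable (\<lambda>n. (1/2::real)^Suc n)" "(\<Sum>n. (1/2::real)^Suc n) = 1"
proof -
  have s: "summable (\<lambda>n. (1/2::real)^n)" by (rule summable_geometric) simp
  have e: "(\<Sum>n. (1/2::real)^n) = 2" using suminf_geometric[of "1/2::real"] by simp
  show "summable (\<lambda>n. (1/2::real)^Suc n)" using summable_mult[OF s, of "1/2"] by simp
  show "(\<Sum>n. (1/2::real)^Suc n) = 1" using suminf_mult[OF s, of "1/2"] e by simp
qed

lemma seq_dist_summable:
  fixes x z :: "nat \<Rightarrow> 'm::metric_space"
  assumes D: "\<And>a b::'m. dist a b \<le> D"
  shows "summable (\<lambda>n. (1/2::real)^Suc n * dist (x n) (z n))"
proof (rule summable_comparison_test'[where N=0])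
  show "summable (\<lambda>n. D * (1/2::real)^Suc n)" using summable_mult[OF geo_sum(1), of D] by simp
  fix n show "norm ((1/2::real)^Suc n * dist (x n) (z n)) \<le> D * (1/2)^Suc n"
    using D[of "x n" "z n"] by (simp add: mult.commute mult_left_mono)
qed

lemma seq_dist_bounds:
  fixes x z :: "nat \<Rightarrow> 'm::metric_space"
  assumes D: "\<And>a b::'m. dist a b \<le> D"
  shows "0 \<le> seq_dist x z" "seq_dist x z \<le> D"
proof -
  show "0 \<le> seq_dist x z" unfolding seq_dist_def
    by (intro suminf_nonneg seq_dist_summable[OF D]) simp
  have "seq_dist x z \<le> (\<Sum>n. D * (1/2::real)^Suc n)" unfolding seq_dist_def
    apply (rule suminf_le)
    using D[of "x _" "z _"] apply (simp add: mult.commute mult_left_mono)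
    apply (rule seq_dist_summable[OF D])
    using summable_mult[OF geo_sum(1), of D] by simp
  also have "\<dots> = D" using suminf_mult[OF geo_sum(1), of D] geo_sum(2) by simp
  finally show "seq_dist x z \<le> D" .
qed

lemma seq_dist_small:
  fixes x :: "nat \<Rightarrow> 'm::metric_space"
  assumes D: "\<And>a b::'m. dist a b \<le> D" and e: "e > 0"
  shows "eventually (\<lambda>y. seq_dist y x < e) (nhds x)"
proof -
  have D0: "D \<ge> 0" using D[of undefined undefined] by simp
  obtain N where N: "D * (1/2::real)^N < e/2"
  proof -
    have "e / (2*(D+1)) > 0" using e D0 by simp
    then obtain N where "(1/2::real)^N < e / (2*(D+1))"
      using real_arch_pow_inv[of "e / (2*(D+1))" "1/2::real"] by auto
    then have "(D+1) * (1/2::real)^N < e/2" using D0 by (simp add: field_simps)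
    moreover have "D * (1/2::real)^N \<le> (D+1) * (1/2::real)^N" by simp
    ultimately have "D * (1/2::real)^N < e/2" by linarith
    then show ?thesis by (rule that)
  qed
  define \<delta> where "\<delta> = e / (2 * (real N + 1))"
  have dpos: "\<delta> > 0" using e by (simp add: \<delta>_def)
  have "eventually (\<lambda>y. \<forall>n\<in>{..<N}. dist (y n) (x n) < \<delta>) (nhds x)"
  proof (rule eventually_ball_finite)
    show "finite {..<N}" by simp
    show "\<forall>n\<in>{..<N}. eventually (\<lambda>y. dist (y n) (x n) < \<delta>) (nhds x)"
    proof
      fix n
      have "isCont (\<lambda>y. y n) x"
        using continuous_on_product_coordinates[of n] continuous_on_eq_continuous_at[OF open_UNIV]
        by blast
      then have "((\<lambda>y. y n) \<longlongrightarrow> x n) (nhds x)"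
        using tendsto_at_iff_tendsto_nhds isCont_def by metis
      then show "eventually (\<lambda>y. dist (y n) (x n) < \<delta>) (nhds x)"
        by (rule tendstoD[OF _ dpos])
    qed
  qed
  then show ?thesis
  proof (rule eventually_mono)
    fix y assume H: "\<forall>n\<in>{..<N}. dist (y n) (x n) < \<delta>"
    define f where "f = (\<lambda>n. (1/2::real)^Suc n * dist (y n) (x n))"
    have sf: "summable f" unfolding f_def by (rule seq_dist_summable[OF D])
    have "seq_dist y x = (\<Sum>k. f (k + N)) + (\<Sum>i<N. f i)"
      unfolding seq_dist_def f_def[symmetric] by (rule suminf_split_initial_segment[OF sf])
    also have "(\<Sum>i<N. f i) \<le> (\<Sum>i<N. \<delta>)"
    proof (rule sum_mono)
      fix i assume "i \<in> {..<N}"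
      then have "dist (y i) (x i) < \<delta>" using H by blast
      moreover have "(1/2::real)^Suc i \<le> 1" by (rule power_le_one) auto
      ultimately show "f i \<le> \<delta>" unfolding f_def
        using mult_right_mono[of "(1/2::real)^Suc i" 1 "dist (y i) (x i)"] by simp
    qed
    also have "(\<Sum>k. f (k + N)) \<le> (\<Sum>k. D * (1/2::real)^N * (1/2)^Suc k)"
    proof (rule suminf_le)
      fix k
      have "f (k + N) \<le> (1/2::real)^Suc (k+N) * D" unfolding f_def
        using D[of "y (k+N)" "x (k+N)"] by (simp add: mult_left_mono)
      also have "\<dots> = D * (1/2::real)^N * (1/2)^Suc k" by (simp add: power_add)
      finally show "f (k + N) \<le> D * (1/2::real)^N * (1/2)^Suc k" .
      show "summable (\<lambda>k. f (k + N))" using sf by (simp add: summable_iff_shift)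
      show "summable (\<lambda>k. D * (1/2::real)^N * (1/2)^Suc k)" by (rule summable_mult[OF geo_sum(1)])
    qed
    also have "(\<Sum>k. D * (1/2::real)^N * (1/2)^Suc k) = D * (1/2)^N"
      using suminf_mult[OF geo_sum(1), of "D * (1/2)^N"] geo_sum(2) by simp
    finally have "seq_dist y x \<le> D * (1/2)^N + real N * \<delta>" by simp
    also have "real N * \<delta> < e/2" using e by (simp add: \<delta>_def field_simps)
    finally show "seq_dist y x < e" using N by linarith
  qed
qed


lemma scons_0[simp]: "scons a x 0 = a" by (simp add: scons_def)
lemma shift_scons[simp]: "shift (scons a x) = x" by (simp add: scons_def shift_def)
lemma scons_shift[simp]: "scons (y 0) (shift y) = y"
  by (rule ext) (simp add: scons_def shift_def split: nat.split)

definition tau :: "(nat \<Rightarrow> 'm) \<times> (nat \<Rightarrow> 'm) \<Rightarrow> (nat \<Rightarrow> 'm) \<times> (nat \<Rightarrow> 'm)" where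
  "tau p = (shift (fst p), scons (fst p 0) (snd p))"

lemma tau_sigma[simp]: "tau (sigma_hat p) = p"
  by (simp add: tau_def sigma_hat_def)

lemma cont_coord: "continuous_on S h \<Longrightarrow> continuous_on S (\<lambda>p. h p n)"
  by (rule continuous_on_product_then_coordinatewise)

lemma cont_scons:
  fixes g :: "'a::topological_space \<Rightarrow> 'b::topological_space"
  assumes "continuous_on S g" "continuous_on S h"
  shows "continuous_on S (\<lambda>p. scons (g p) (h p))"
proof (rule continuous_on_coordinatewise_then_product)
  fix n show "continuous_on S (\<lambda>p. scons (g p) (h p) n)"
    using assms cont_coord[OF assms(2)] by (cases n) (simp_all add: scons_def)
qed

lemma cont_shift:
  fixes h :: "'a::topological_space \<Rightarrow> nat \<Rightarrow> 'b::topological_space"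
  assumes "continuous_on S h"
  shows "continuous_on S (\<lambda>p. shift (h p))"
  unfolding shift_def
  by (rule continuous_on_coordinatewise_then_product) (rule cont_coord[OF assms])

lemma lip_cont:
  fixes f :: "(nat \<Rightarrow> 'm::metric_space) \<Rightarrow> real"
  assumes D: "\<And>a b::'m. dist a b \<le> D" and L: "seq_lipschitz f"
  shows "continuous_on UNIV f"
proof (rule continuous_at_imp_continuous_on, intro ballI)
  fix x :: "nat \<Rightarrow> 'm"
  obtain C where C: "\<And>x z. \<bar>f x - f z\<bar> \<le> C * seq_dist x z" using L seq_lipschitz_def by blast
  have "(f \<longlongrightarrow> f x) (nhds x)"
  proof (rule tendsto_iff[THEN iffD2], intro allI impI)
    fix e :: real assume e: "e > 0"
    have "eventually (\<lambda>y. seq_dist y x < e / (\<bar>C\<bar>+1)) (nhds x)"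
      using e by (intro seq_dist_small[OF D]) simp
    then show "eventually (\<lambda>y. dist (f y) (f x) < e) (nhds x)"
    proof (rule eventually_mono)
      fix y assume H: "seq_dist y x < e / (\<bar>C\<bar>+1)"
      have s0: "seq_dist y x \<ge> 0" by (rule seq_dist_bounds[OF D])
      have "dist (f y) (f x) \<le> C * seq_dist y x" using C[of y x] by (simp add: dist_real_def)
      also have "\<dots> \<le> (\<bar>C\<bar>+1) * seq_dist y x" using s0 by (intro mult_right_mono) auto
      also have "\<dots> < e" using H by (simp add: field_simps)
      finally show "dist (f y) (f x) < e" .
    qed
  qed
  then show "isCont f x" using tendsto_at_iff_tendsto_nhds isCont_def by metis
qed

lemma ev_comp:
  assumes "filterlim g (nhds a) F" "eventually P (nhds a)"
  shows "eventually (\<lambda>x. P (g x)) F"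
  using assms filterlim_iff by blast

lemma hat_lip_cont:
  fixes f :: "(nat \<Rightarrow> 'm::metric_space) \<times> (nat \<Rightarrow> 'm) \<Rightarrow> real"
  assumes D: "\<And>a b::'m. dist a b \<le> D" and L: "hat_lipschitz f"
  shows "continuous_on UNIV f"
proof (rule continuous_at_imp_continuous_on, intro ballI)
  fix p :: "(nat \<Rightarrow> 'm) \<times> (nat \<Rightarrow> 'm)"
  obtain C where C: "\<And>x z. \<bar>f x - f z\<bar> \<le> C * hat_dist x z" using L hat_lipschitz_def by blast
  have id: "filterlim (\<lambda>q. q) (nhds p) (nhds p)" by (rule filterlim_ident)
  have "(f \<longlongrightarrow> f p) (nhds p)"
  proof (rule tendsto_iff[THEN iffD2], intro allI impI)
    fix e :: real assume e: "e > 0"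
    have e2: "e / (2*(\<bar>C\<bar>+1)) > 0" using e by simp
    have "eventually (\<lambda>q. seq_dist (fst q) (fst p) < e / (2*(\<bar>C\<bar>+1))) (nhds p)"
      by (rule ev_comp[OF tendsto_fst[OF id] seq_dist_small[OF D e2]])
    moreover have "eventually (\<lambda>q. seq_dist (snd q) (snd p) < e / (2*(\<bar>C\<bar>+1))) (nhds p)"
      by (rule ev_comp[OF tendsto_snd[OF id] seq_dist_small[OF D e2]])
    ultimately show "eventually (\<lambda>q. dist (f q) (f p) < e) (nhds p)"
    proof (rule eventually_elim2)
      fix q assume H1: "seq_dist (fst q) (fst p) < e / (2*(\<bar>C\<bar>+1))"
        and H2: "seq_dist (snd q) (snd p) < e / (2*(\<bar>C\<bar>+1))"
      have s0: "hat_dist q p \<ge> 0" unfolding hat_dist_def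
        using seq_dist_bounds(1)[OF D] by (simp add: add_nonneg_nonneg)
      have hq: "hat_dist q p < e / (\<bar>C\<bar>+1)" using H1 H2 unfolding hat_dist_def
        by (simp add: field_simps)
      have "dist (f q) (f p) \<le> C * hat_dist q p" using C[of q p] by (simp add: dist_real_def)
      also have "\<dots> \<le> (\<bar>C\<bar>+1) * hat_dist q p" using s0 by (intro mult_right_mono) auto
      also have "\<dots> < e" using hq by (simp add: field_simps)
      finally show "dist (f q) (f p) < e" .
    qed
  qed
  then show "isCont f p" using tendsto_at_iff_tendsto_nhds isCont_def by metis
qed

lemma lip_bounded:
  fixes f :: "(nat \<Rightarrow> 'm::metric_space) \<Rightarrow> real"
  assumes D: "\<And>a b::'m. dist a b \<le> D" and L: "seq_lipschitz f"
  shows "\<exists>B. \<forall>x. \<bar>f x\<bar> \<le> B"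
proof -
  obtain C where C: "\<And>x z. \<bar>f x - f z\<bar> \<le> C * seq_dist x z" using L seq_lipschitz_def by blast
  have "\<bar>f x\<bar> \<le> \<bar>f undefined\<bar> + \<bar>C\<bar> * D" for x
  proof -
    have "\<bar>f x - f undefined\<bar> \<le> C * seq_dist x undefined" by (rule C)
    also have "\<dots> \<le> \<bar>C\<bar> * seq_dist x undefined"
      using seq_dist_bounds(1)[OF D] by (intro mult_right_mono) auto
    also have "\<dots> \<le> \<bar>C\<bar> * D" using seq_dist_bounds(2)[OF D] by (intro mult_left_mono) auto
    finally show ?thesis by linarith
  qed
  then show ?thesis by blast
qed

lemma hat_lip_bounded:
  fixes f :: "(nat \<Rightarrow> 'm::metric_space) \<times> (nat \<Rightarrow> 'm) \<Rightarrow> real"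
  assumes D: "\<And>a b::'m. dist a b \<le> D" and L: "hat_lipschitz f"
  shows "\<exists>B. \<forall>x. \<bar>f x\<bar> \<le> B"
proof -
  obtain C where C: "\<And>x z. \<bar>f x - f z\<bar> \<le> C * hat_dist x z" using L hat_lipschitz_def by blast
  define z0 :: "(nat\<Rightarrow>'m)\<times>(nat\<Rightarrow>'m)" where "z0 = undefined"
  have "\<bar>f x\<bar> \<le> \<bar>f z0\<bar> + \<bar>C\<bar> * (2*D)" for x
  proof -
    have a: "0 \<le> seq_dist (fst x) (fst z0)" "seq_dist (fst x) (fst z0) \<le> D"
      by (rule seq_dist_bounds[OF D])+
    have b: "0 \<le> seq_dist (snd x) (snd z0)" "seq_dist (snd x) (snd z0) \<le> D"
      by (rule seq_dist_bounds[OF D])+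
    have h0: "hat_dist x z0 \<ge> 0" "hat_dist x z0 \<le> 2*D" unfolding hat_dist_def
      using a b by linarith+
    have "\<bar>f x - f z0\<bar> \<le> C * hat_dist x z0" by (rule C)
    also have "\<dots> \<le> \<bar>C\<bar> * hat_dist x z0"
      using h0 by (intro mult_right_mono) auto
    also have "\<dots> \<le> \<bar>C\<bar> * (2*D)" using h0 by (intro mult_left_mono) auto
    finally show ?thesis by linarith
  qed
  then show ?thesis by blast
qed

lemma intg:
  fixes f :: "'a::topological_space \<Rightarrow> real"
  assumes "prob_space M" "sets M = sets borel" "continuous_on UNIV f" "\<And>x. \<bar>f x\<bar> \<le> B"
  shows "integrable M f"
proof -
  interpret prob_space M by fact
  have "f \<in> borel_measurable M"
    using borel_measurable_continuous_onI[OF assms(3)] measurable_cong_sets[OF assms(2) refl] by metis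
  then show ?thesis using assms(4) by (intro integrable_const_bound[where B=B]) auto
qed


lemma meas_lemma: "sets M = sets borel \<Longrightarrow> continuous_on UNIV f \<Longrightarrow> f \<in> measurable M borel"
  using borel_measurable_continuous_onI measurable_cong_sets[of M borel borel borel] by metis

theorem mainTheorem13:
  fixes A :: "(nat \<Rightarrow> 'm::metric_space) \<Rightarrow> real"
    and W :: "(nat \<Rightarrow> 'm) \<times> (nat \<Rightarrow> 'm) \<Rightarrow> real"
    and Am :: "(nat \<Rightarrow> 'm) \<Rightarrow> real"
    and \<mu> :: "(nat \<Rightarrow> 'm) measure"
    and \<mu>h :: "((nat \<Rightarrow> 'm) \<times> (nat \<Rightarrow> 'm)) measure"
  assumes "compact (UNIV :: 'm set)"
    and "seq_lipschitz A"
    and "involution_kernel A W Am"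
    and "equilibrium_prob \<mu>"
    and "invariant_extension \<mu> \<mu>h"
  shows "(\<integral>x. A x \<partial>\<mu>) = (\<integral>y. Am y \<partial>(distr \<mu>h borel fst)) \<and>
         (\<integral>x. (Am \<circ> inv theta) x \<partial>\<mu>) = (\<integral>y. (A \<circ> theta) y \<partial>(distr \<mu>h borel fst))"
proof -
  have D: "\<And>a b::'m. dist a b \<le> diameter (UNIV::'m set)"
    using compact_imp_bounded[OF assms(1)] diameter_bounded_bound by blast
  have P: "prob_space \<mu>h" and S: "sets \<mu>h = sets borel" and I: "distr \<mu>h borel sigma_hat = \<mu>h"
    and M: "distr \<mu>h borel snd = \<mu>"
    using assms(5) unfolding invariant_extension_def by auto
  have LW: "hat_lipschitz W" and eq: "\<And>y x. Am y = A (scons (y 0) x) + W (shift y, scons (y 0) x) - W (y, x)"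
    using assms(3) unfolding involution_kernel_def by auto
  have cA: "continuous_on UNIV A" by (rule lip_cont[OF D assms(2)])
  have cW: "continuous_on UNIV W" by (rule hat_lip_cont[OF D LW])
  obtain BA where BA: "\<And>x. \<bar>A x\<bar> \<le> BA" using lip_bounded[OF D assms(2)] by blast
  obtain BW where BW: "\<And>x. \<bar>W x\<bar> \<le> BW" using hat_lip_bounded[OF D LW] by blast
  have Am_eq: "Am = (\<lambda>y. A (scons (y 0) undefined) + W (shift y, scons (y 0) undefined) - W (y, undefined))"
    by (rule ext) (rule eq)
  have cI: "continuous_on UNIV (\<lambda>y::nat\<Rightarrow>'m. y)" by (rule continuous_on_id)
  have cS: "continuous_on UNIV (\<lambda>y::nat\<Rightarrow>'m. scons (y 0) undefined)"
    by (rule cont_scons[OF cont_coord[OF cI] continuous_on_const])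
  have cAm: "continuous_on UNIV Am" unfolding Am_eq
    apply (rule continuous_on_diff)
     apply (rule continuous_on_add)
      apply (rule continuous_on_compose2[OF cA cS]; simp)
     apply (rule continuous_on_compose2[OF cW continuous_on_Pair[OF cont_shift[OF cI] cS]]; simp)
    apply (rule continuous_on_compose2[OF cW continuous_on_Pair[OF cI continuous_on_const]]; simp)
    done
  have BAm: "\<bar>Am y\<bar> \<le> BA + 2 * BW" for y
    using eq[of y undefined] BA[of "scons (y 0) undefined"] BW[of "(shift y, scons (y 0) undefined)"]
      BW[of "(y, undefined)"] by linarith
  have cP: "continuous_on UNIV (\<lambda>p::(nat\<Rightarrow>'m)\<times>(nat\<Rightarrow>'m). p)" by (rule continuous_on_id)
  have cfst: "continuous_on UNIV (\<lambda>p::(nat\<Rightarrow>'m)\<times>(nat\<Rightarrow>'m). fst p)" by (rule continuous_on_fst[OF cP])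
  have csnd: "continuous_on UNIV (\<lambda>p::(nat\<Rightarrow>'m)\<times>(nat\<Rightarrow>'m). snd p)" by (rule continuous_on_snd[OF cP])
  have ctau: "continuous_on UNIV (tau :: (nat\<Rightarrow>'m)\<times>(nat\<Rightarrow>'m) \<Rightarrow> _)" unfolding tau_def
    by (rule continuous_on_Pair[OF cont_shift[OF cfst] cont_scons[OF cont_coord[OF cfst] csnd]])
  have csig: "continuous_on UNIV (sigma_hat :: (nat\<Rightarrow>'m)\<times>(nat\<Rightarrow>'m) \<Rightarrow> _)"
    unfolding sigma_hat_def
    by (rule continuous_on_Pair[OF cont_scons[OF cont_coord[OF csnd] cfst] cont_shift[OF csnd]])
  have cswap: "continuous_on UNIV (\<lambda>p::(nat\<Rightarrow>'m)\<times>(nat\<Rightarrow>'m). (snd p, fst p))"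
    by (rule continuous_on_Pair[OF csnd cfst])
  note meas = meas_lemma[OF S]
  note measB = borel_measurable_continuous_onI
  have ig: "integrable \<mu>h f" if "continuous_on UNIV f" "\<And>x. \<bar>f x\<bar> \<le> B" for f :: "(nat\<Rightarrow>'m)\<times>(nat\<Rightarrow>'m) \<Rightarrow> real" and B
    by (rule intg[OF P S that(1)]) (rule that(2))
  have tauinv: "(\<integral>p. f (tau p) \<partial>\<mu>h) = (\<integral>p. f p \<partial>\<mu>h)" if cf: "continuous_on UNIV f" for f :: "_ \<Rightarrow> real"
  proof -
    have "integral\<^sup>L (distr \<mu>h borel sigma_hat) (\<lambda>p. f (tau p)) = (\<integral>p. f (tau (sigma_hat p)) \<partial>\<mu>h)"
      by (rule integral_distr[OF meas[OF csig] measB]) (rule continuous_on_compose2[OF cf ctau]; simp)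
    then show ?thesis using I by simp
  qed
  have cAs: "continuous_on UNIV (\<lambda>p::(nat\<Rightarrow>'m)\<times>(nat\<Rightarrow>'m). A (snd p))" by (rule continuous_on_compose2[OF cA csnd]; simp)
  have cAf: "continuous_on UNIV (\<lambda>p::(nat\<Rightarrow>'m)\<times>(nat\<Rightarrow>'m). A (fst p))" by (rule continuous_on_compose2[OF cA cfst]; simp)
  have cAmf: "continuous_on UNIV (\<lambda>p::(nat\<Rightarrow>'m)\<times>(nat\<Rightarrow>'m). Am (fst p))" by (rule continuous_on_compose2[OF cAm cfst]; simp)
  have cAms: "continuous_on UNIV (\<lambda>p::(nat\<Rightarrow>'m)\<times>(nat\<Rightarrow>'m). Am (snd p))" by (rule continuous_on_compose2[OF cAm csnd]; simp)
  have cWs: "continuous_on UNIV (\<lambda>p::(nat\<Rightarrow>'m)\<times>(nat\<Rightarrow>'m). W (snd p, fst p))" by (rule continuous_on_compose2[OF cW cswap]; simp)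
  have cAst: "continuous_on UNIV (\<lambda>p. A (snd (tau p)))" by (rule continuous_on_compose2[OF cAs ctau]; simp)
  have cWt: "continuous_on UNIV (\<lambda>p. W (tau p))" by (rule continuous_on_compose2[OF cW ctau]; simp)
  have cWst: "continuous_on UNIV (\<lambda>p. W (snd (tau p), fst (tau p)))" by (rule continuous_on_compose2[OF cWs ctau]; simp)
  have iAst: "integrable \<mu>h (\<lambda>p. A (snd (tau p)))" by (rule ig[OF cAst]) (rule BA)
  have iAf: "integrable \<mu>h (\<lambda>p. A (fst p))" by (rule ig[OF cAf]) (rule BA)
  have iWt: "integrable \<mu>h (\<lambda>p. W (tau p))" by (rule ig[OF cWt]) (rule BW)
  have iW: "integrable \<mu>h W" by (rule ig[OF cW]) (rule BW)
  have iWs: "integrable \<mu>h (\<lambda>p. W (snd p, fst p))" by (rule ig[OF cWs]) (rule BW)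
  have iWst: "integrable \<mu>h (\<lambda>p. W (snd (tau p), fst (tau p)))" by (rule ig[OF cWst]) (rule BW)
  have eqF: "(\<integral>y. f y \<partial>(distr \<mu>h borel fst)) = (\<integral>p. f (fst p) \<partial>\<mu>h)" if "continuous_on UNIV f" for f :: "_ \<Rightarrow> real"
    by (rule integral_distr[OF meas[OF cfst] measB[OF that]])
  have eqS: "(\<integral>y. f y \<partial>\<mu>) = (\<integral>p. f (snd p) \<partial>\<mu>h)" if "continuous_on UNIV f" for f :: "_ \<Rightarrow> real"
    unfolding M[symmetric] by (rule integral_distr[OF meas[OF csnd] measB[OF that]])
  have part1: "(\<integral>x. A x \<partial>\<mu>) = (\<integral>y. Am y \<partial>(distr \<mu>h borel fst))"
  proof -
    have "(\<integral>y. Am y \<partial>(distr \<mu>h borel fst)) = (\<integral>p. Am (fst p) \<partial>\<mu>h)" by (rule eqF[OF cAm])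
    also have "\<dots> = (\<integral>p. A (snd (tau p)) + W (tau p) - W p \<partial>\<mu>h)"
    proof (rule Bochner_Integration.integral_cong[OF refl])
      fix p :: "(nat\<Rightarrow>'m)\<times>(nat\<Rightarrow>'m)"
      show "Am (fst p) = A (snd (tau p)) + W (tau p) - W p"
        using eq[of "fst p" "snd p"] by (simp add: tau_def)
    qed
    also have "\<dots> = (\<integral>p. A (snd (tau p)) \<partial>\<mu>h) + (\<integral>p. W (tau p) \<partial>\<mu>h) - (\<integral>p. W p \<partial>\<mu>h)"
      using iAst iWt iW by simp
    also have "\<dots> = (\<integral>p. A (snd p) \<partial>\<mu>h)"
      using tauinv[OF cAs] tauinv[OF cW] by simp
    also have "\<dots> = (\<integral>x. A x \<partial>\<mu>)" by (rule eqS[OF cA, symmetric])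
    finally show ?thesis by simp
  qed
  have th: "theta = (\<lambda>y. y)" by (rule ext) (simp add: theta_def)
  have part2: "(\<integral>x. Am x \<partial>\<mu>) = (\<integral>y. A y \<partial>(distr \<mu>h borel fst))"
  proof -
    have "(\<integral>x. Am x \<partial>\<mu>) = (\<integral>p. Am (snd p) \<partial>\<mu>h)" by (rule eqS[OF cAm])
    also have "\<dots> = (\<integral>p. Am (snd (tau p)) \<partial>\<mu>h)" by (rule tauinv[OF cAms, symmetric])
    also have "\<dots> = (\<integral>p. A (fst p) + W (snd p, fst p) - W (snd (tau p), fst (tau p)) \<partial>\<mu>h)"
    proof (rule Bochner_Integration.integral_cong[OF refl])
      fix p :: "(nat\<Rightarrow>'m)\<times>(nat\<Rightarrow>'m)"
      obtain y x where p: "p = (y, x)" by (cases p)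
      show "Am (snd (tau p)) = A (fst p) + W (snd p, fst p) - W (snd (tau p), fst (tau p))"
        using eq[of "scons (y 0) x" "shift y"] by (simp add: p tau_def)
    qed
    also have "\<dots> = (\<integral>p. A (fst p) \<partial>\<mu>h) + (\<integral>p. W (snd p, fst p) \<partial>\<mu>h) - (\<integral>p. W (snd (tau p), fst (tau p)) \<partial>\<mu>h)"
      using iAf iWs iWst by simp
    also have "\<dots> = (\<integral>p. A (fst p) \<partial>\<mu>h)"
      using tauinv[OF cWs] by simp
    also have "\<dots> = (\<integral>y. A y \<partial>(distr \<mu>h borel fst))" by (rule eqF[OF cA, symmetric])
    finally show ?thesis .
  qed
  have hI: "inv theta = (\<lambda>y::nat\<Rightarrow>'m. y)" unfolding th by (rule inv_id[unfolded id_def])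
  have c1: "Am \<circ> inv theta = Am" by (rule ext) (simp only: hI comp_apply)
  have c2: "A \<circ> theta = A" by (rule ext) (simp only: th comp_apply)
  show ?thesis unfolding c1 c2 using part1 part2 by (rule conjI)
qed

end
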